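(* Let $d,K,n$ be positive integers with $K\ge 2$. With $\mathcal L_0$ and $\mathcal{WH}^-$ as defined below, there exists $\tau_0>0$ such that for every $\tau\in(0,\tau_0)$, $$\operatorname{argmin}_{(\mathbf W,\mathbf H)\in\mathrm{OB}(d,K)\times\mathrm{OB}(d,nK)}\mathcal L_0(\mathbf W,\mathbf H,\tau)\subseteq\mathcal{WH}^-.$$
   Context: $\mathrm{OB}(d,m)$ is the set of real $d\times m$ matrices with unit-norm columns; $\mathbf W$ has columns $\mathbf w_k$ ($k\in[K]$), $\mathbf H$ has columns $\mathbf h_{k,i}$ ($k\in[K],i\in[n]$). $\mathbf y_k$ is the $k$-th standard basis vector of $\mathbb R^K$; $\mathcal L_{\mathrm{CE}}(\mathbf z,\mathbf y_k,\tau)=-\log\big(\exp(z_k/\tau)/\sum_{j}\exp(z_j/\tau)\big)$. $\mathcal L_0(\mathbf W,\mathbf H,\tau)=\tau\log\sum_{i=1}^n\sum_{k=1}^K\mathcal L_{\mathrm{CE}}(\mathbf W^\top\mathbf h_{k,i},\mathbf y_k,\tau)$. $\mathcal{WH}^-=\{(\mathbf W,\mathbf H)\in\mathrm{OB}(d,K)\times\mathrm{OB}(d,nK):(\mathbf w_{k'}-\mathbf w_k)^\top\mathbf h_{k,i}\le0\ \forall i,k,\ k'\ne k\}$. *)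

theory Defs
  imports Complex_Main
begin

text \<open>A real d x m matrix is represented as a function M :: nat => nat => real,
  where M c r is the r-th entry (r < d) of the c-th column (c < m); entries
  outside the range are required to be zero.\<close>

definition OB :: "nat \<Rightarrow> nat \<Rightarrow> (nat \<Rightarrow> nat \<Rightarrow> real) set" where
  "OB d m = {M. (\<forall>c<m. (\<Sum>r<d. (M c r)^2) = 1) \<and>
                (\<forall>c r. (m \<le> c \<or> d \<le> r) \<longrightarrow> M c r = 0)}"

text \<open>Column h_{k,i} of H (k < K, i < n) is the column with index k*n+i.\<close>
definition hcol :: "nat \<Rightarrow> (nat \<Rightarrow> nat \<Rightarrow> real) \<Rightarrow> nat \<Rightarrow> nat \<Rightarrow> (nat \<Rightarrow> real)" where
  "hcol n H k i = H (k * n + i)"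

definition L_CE :: "nat \<Rightarrow> (nat \<Rightarrow> real) \<Rightarrow> nat \<Rightarrow> real \<Rightarrow> real" where
  "L_CE K z k tau = - ln (exp (z k / tau) / (\<Sum>j<K. exp (z j / tau)))"

definition logits :: "nat \<Rightarrow> (nat \<Rightarrow> nat \<Rightarrow> real) \<Rightarrow> (nat \<Rightarrow> real) \<Rightarrow> nat \<Rightarrow> real" where
  "logits d W h j = (\<Sum>r<d. W j r * h r)"

definition L0 :: "nat \<Rightarrow> nat \<Rightarrow> nat \<Rightarrow> (nat \<Rightarrow> nat \<Rightarrow> real) \<Rightarrow> (nat \<Rightarrow> nat \<Rightarrow> real) \<Rightarrow> real \<Rightarrow> real" where
  "L0 d K n W H tau =
     tau * ln (\<Sum>i<n. \<Sum>k<K. L_CE K (logits d W (hcol n H k i)) k tau)"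

definition argmin_L0 :: "nat \<Rightarrow> nat \<Rightarrow> nat \<Rightarrow> real \<Rightarrow> ((nat \<Rightarrow> nat \<Rightarrow> real) \<times> (nat \<Rightarrow> nat \<Rightarrow> real)) set" where
  "argmin_L0 d K n tau =
     {(W, H). W \<in> OB d K \<and> H \<in> OB d (n * K) \<and>
        (\<forall>W' H'. W' \<in> OB d K \<longrightarrow> H' \<in> OB d (n * K) \<longrightarrow>
           L0 d K n W H tau \<le> L0 d K n W' H' tau)}"

definition WH_minus :: "nat \<Rightarrow> nat \<Rightarrow> nat \<Rightarrow> ((nat \<Rightarrow> nat \<Rightarrow> real) \<times> (nat \<Rightarrow> nat \<Rightarrow> real)) set" where
  "WH_minus d K n =
     {(W, H). W \<in> OB d K \<and> H \<in> OB d (n * K) \<and>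
        (\<forall>i<n. \<forall>k<K. \<forall>k'<K. k' \<noteq> k \<longrightarrow>
           (\<Sum>r<d. (W k' r - W k r) * hcol n H k i r) \<le> 0)}"

end

theory Submission
  imports Defs
begin

definition Ssum :: "nat \<Rightarrow> nat \<Rightarrow> nat \<Rightarrow> (nat \<Rightarrow> nat \<Rightarrow> real) \<Rightarrow> (nat \<Rightarrow> nat \<Rightarrow> real) \<Rightarrow> real \<Rightarrow> real" where
  "Ssum d K n W H tau = (\<Sum>i<n. \<Sum>k<K. L_CE K (logits d W (hcol n H k i)) k tau)"

lemma CE_eq:
  assumes "k < K" "0 < tau"
  shows "L_CE K z k tau = ln (\<Sum>j<K. exp ((z j - z k) / tau))"
proof -
  have pos: "(\<Sum>j<K. exp (z j / tau)) > 0" using assms by (intro sum_pos) auto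
  have "(\<Sum>j<K. exp ((z j - z k) / tau)) = (\<Sum>j<K. exp (z j / tau)) / exp (z k / tau)"
    by (simp add: diff_divide_distrib exp_diff sum_divide_distrib)
  then show ?thesis unfolding L_CE_def using pos by (simp add: ln_div)
qed

lemma CE_lower:
  assumes "k < K" "j < K" "j \<noteq> k" "0 < tau"
  shows "ln (1 + exp ((z j - z k) / tau)) \<le> L_CE K z k tau"
proof -
  have "1 + exp ((z j - z k) / tau) = (\<Sum>x\<in>{j,k}. exp ((z x - z k) / tau))"
    using assms by simp
  also have "\<dots> \<le> (\<Sum>x<K. exp ((z x - z k) / tau))"
    by (rule sum_mono2) (use assms in auto)
  finally have "ln (1 + exp ((z j - z k) / tau)) \<le> ln (\<Sum>x<K. exp ((z x - z k) / tau))"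
    by (intro ln_mono) (auto intro: add_pos_pos)
  then show ?thesis using CE_eq[OF assms(1,4)] by simp
qed

lemma CE_pos:
  assumes "k < K" "2 \<le> K" "0 < tau"
  shows "0 < L_CE K z k tau"
proof -
  define j where "j = (if k = 0 then 1 else (0::nat))"
  have "j < K" "j \<noteq> k" using assms by (auto simp: j_def)
  have "0 < ln (1 + exp ((z j - z k) / tau))" by (intro ln_gt_zero) (simp add: add_pos_pos)
  also have "\<dots> \<le> L_CE K z k tau" by (rule CE_lower) (use assms \<open>j<K\<close> \<open>j\<noteq>k\<close> in auto)
  finally show ?thesis .
qed

lemma S_ge_CE:
  assumes "2 \<le> K" "0 < tau" "i < n" "k < K"
  shows "L_CE K (logits d W (hcol n H k i)) k tau \<le> Ssum d K n W H tau"
proof -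
  have "L_CE K (logits d W (hcol n H k i)) k tau \<le> (\<Sum>k<K. L_CE K (logits d W (hcol n H k i)) k tau)"
    by (rule member_le_sum) (use assms in \<open>auto intro!: less_imp_le CE_pos[OF _ assms(1,2)]\<close>)
  also have "\<dots> \<le> Ssum d K n W H tau" unfolding Ssum_def
    by (rule member_le_sum) (use assms in \<open>auto intro!: sum_nonneg less_imp_le[OF CE_pos[OF _ assms(1,2)]]\<close>)
  finally show ?thesis .
qed

lemma S_pos:
  assumes "2 \<le> K" "0 < tau" "0 < n"
  shows "0 < Ssum d K n W H tau"
  unfolding Ssum_def using assms by (intro sum_pos) (auto intro!: sum_pos CE_pos simp: lessThan_empty_iff)

lemma argmin_le:
  assumes "(W, H) \<in> argmin_L0 d K n tau" "W' \<in> OB d K" "H' \<in> OB d (n * K)"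
    "2 \<le> K" "0 < tau" "0 < n"
  shows "Ssum d K n W H tau \<le> Ssum d K n W' H' tau"
proof -
  have "tau * ln (Ssum d K n W H tau) \<le> tau * ln (Ssum d K n W' H' tau)"
    using assms(1-3) unfolding argmin_L0_def L0_def Ssum_def by auto
  then have "ln (Ssum d K n W H tau) \<le> ln (Ssum d K n W' H' tau)" using assms(5) by simp
  then show ?thesis using S_pos[OF assms(4-6)] by simp
qed

lemma logits_diff:
  "logits d W h k' - logits d W h k = (\<Sum>r<d. (W k' r - W k r) * h r)"
  by (simp add: logits_def sum_subtractf[symmetric] left_diff_distrib)

lemma key:
  assumes "(W, H) \<in> argmin_L0 d K n tau" "W' \<in> OB d K" "H' \<in> OB d (n * K)"
    "2 \<le> K" "0 < tau" "0 < n" "i < n" "k < K" "k' < K" "k' \<noteq> k"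
  shows "ln (1 + exp ((\<Sum>r<d. (W k' r - W k r) * hcol n H k i r) / tau)) \<le> Ssum d K n W' H' tau"
proof -
  have "ln (1 + exp ((\<Sum>r<d. (W k' r - W k r) * hcol n H k i r) / tau))
     \<le> L_CE K (logits d W (hcol n H k i)) k tau"
    using CE_lower[of k K k' tau "logits d W (hcol n H k i)"] assms by (simp add: logits_diff)
  also have "\<dots> \<le> Ssum d K n W H tau" by (rule S_ge_CE) (use assms in auto)
  also have "\<dots> \<le> Ssum d K n W' H' tau" by (rule argmin_le) (use assms in auto)
  finally show ?thesis .
qed


lemma cos_ne_1:
  assumes "j < K" "k < K" "j \<noteq> k"
  shows "cos (2*pi*real j/real K - 2*pi*real k/real K) < 1"
proof -
  have "cos (2*pi*real j/real K - 2*pi*real k/real K) \<noteq> 1"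
  proof
    assume "cos (2*pi*real j/real K - 2*pi*real k/real K) = 1"
    then obtain m :: int where m: "2*pi*real j/real K - 2*pi*real k/real K = real_of_int m * 2 * pi"
      by (auto simp: cos_one_2pi_int)
    have K0: "real K > 0" using assms by simp
    have "2*pi*(real j - real k) = real_of_int m * 2 * pi * real K"
      using m K0 by (simp add: field_simps)
    then have "real j - real k = real_of_int m * real K" by simp
    then have e: "int j - int k = m * int K"
      by (metis of_int_eq_iff of_int_mult of_int_of_nat_eq of_int_diff)
    show False
    proof (cases "m = 0")
      case True then show False using e assms by simp
    next
      case False
      then have "m \<ge> 1 \<or> m \<le> -1" by linarith
      then show False
      proof
        assume "m \<ge> 1"
        then have "m * int K \<ge> int K" using mult_right_mono[of 1 m "int K"] by simp
        then show False using e assms by linarith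
      next
        assume "m \<le> -1"
        then have "m * int K \<le> - int K" using mult_right_mono[of m "-1" "int K"] by simp
        then show False using e assms by linarith
      qed
    qed
  qed
  then show ?thesis using cos_le_one[of "2*pi*real j/real K - 2*pi*real k/real K"] by linarith
qed


lemma CE_upper:
  assumes "k < K" "0 < tau" "0 < delta" "\<And>j. j < K \<Longrightarrow> j \<noteq> k \<Longrightarrow> z j - z k \<le> - delta"
  shows "L_CE K z k tau \<le> real K * tau / delta"
proof -
  have b: "exp ((z j - z k) / tau) \<le> tau / delta" if "j < K" "j \<noteq> k" for j
  proof -
    have "(z j - z k) / tau \<le> (- delta) / tau" using assms(2) assms(4)[OF that]
      by (intro divide_right_mono) auto
    then have "(z j - z k) / tau \<le> - (delta / tau)" by simp
    then have "exp ((z j - z k) / tau) \<le> exp (- (delta / tau))" by simp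
    also have "\<dots> = 1 / exp (delta / tau)" by (simp add: exp_minus field_simps)
    also have "\<dots> \<le> 1 / (delta / tau)"
    proof -
      have "delta / tau \<le> exp (delta / tau)" using exp_ge_add_one_self[of "delta/tau"] by linarith
      then show ?thesis using assms by (intro divide_left_mono) auto
    qed
    also have "\<dots> = tau / delta" by simp
    finally show ?thesis .
  qed
  have "(\<Sum>j<K. exp ((z j - z k) / tau)) = exp ((z k - z k)/tau) + (\<Sum>j\<in>{..<K}-{k}. exp ((z j - z k) / tau))"
    using assms(1) by (subst sum.remove[of _ k]) auto
  also have "\<dots> \<le> 1 + real (card ({..<K}-{k})) * (tau / delta)"
    using b sum_bounded_above[of "{..<K}-{k}" "\<lambda>j. exp ((z j - z k) / tau)" "tau / delta"]
    by simp
  also have "\<dots> \<le> 1 + real K * (tau / delta)"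
    using assms by (intro add_left_mono mult_right_mono) (auto simp: card_Diff_singleton)
  finally have s: "(\<Sum>j<K. exp ((z j - z k) / tau)) \<le> 1 + real K * (tau / delta)" .
  have "L_CE K z k tau \<le> ln (1 + real K * (tau / delta))"
    unfolding CE_eq[OF assms(1,2)] using assms(1) by (intro ln_mono s sum_pos) auto
  also have "\<dots> \<le> real K * (tau / delta)" using assms by (intro ln_add_one_self_le_self) auto
  finally show ?thesis by simp
qed

lemma construct2:
  assumes "2 \<le> d" "2 \<le> K" "0 < n"
  shows "\<exists>W' H' delta. W' \<in> OB d K \<and> H' \<in> OB d (n*K) \<and> delta > 0 \<and>
     (\<forall>tau>0. Ssum d K n W' H' tau \<le> real n * (real K * (real K * tau / delta)))"
proof -
  define a where "a = (\<lambda>c::nat. 2*pi*real c/real K)"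
  define W' where "W' = (\<lambda>c r. if c < K then (if r = 0 then cos (a c) else if r = (1::nat) then sin (a c) else 0) else (0::real))"
  define H' where "H' = (\<lambda>c r. if c < n * K then W' (c div n) r else 0)"
  have sum01: "(\<Sum>r<d. f r) = f 0 + f 1" if "\<And>r. r \<ge> 2 \<Longrightarrow> f r = 0" for f :: "nat \<Rightarrow> real"
  proof -
    have "(\<Sum>r<d. f r) = (\<Sum>r\<in>{0,1}. f r)"
      by (rule sum.mono_neutral_right) (use assms that in auto)
    then show ?thesis by simp
  qed
  have W'col: "(\<Sum>r<d. (W' c r)^2) = 1" if "c < K" for c
    by (subst sum01) (auto simp: W'_def that)
  have W'OB: "W' \<in> OB d K" unfolding OB_def using W'col assms by (auto simp: W'_def)
  have divK: "c div n < K" if "c < n * K" for c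
    using that assms by (simp add: less_mult_imp_div_less mult.commute)
  have H'OB: "H' \<in> OB d (n*K)" unfolding OB_def using W'col divK W'OB
    by (auto simp: H'_def OB_def)
  have hc: "hcol n H' k i = W' k" if "k < K" "i < n" for k i
  proof -
    have "k * n + i < n * K"
    proof -
      have "k * n + i < (k+1) * n" using that by simp
      also have "\<dots> \<le> K * n" using that by (intro mult_right_mono) auto
      finally show ?thesis by (simp add: mult.commute)
    qed
    moreover have "(k * n + i) div n = k" using that by simp
    ultimately show ?thesis by (simp add: hcol_def H'_def)
  qed
  have lg: "logits d W' (W' k) j = cos (a j - a k)" if "j < K" "k < K" for j k
    unfolding logits_def by (subst sum01) (auto simp: W'_def that cos_diff)
  define D where "D = {(j,k). j < K \<and> k < K \<and> j \<noteq> k}"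
  define delta where "delta = Min ((\<lambda>(j,k). 1 - cos (a j - a k)) ` D)"
  have finD: "finite D" unfolding D_def
    by (rule finite_subset[of _ "{..<K} \<times> {..<K}"]) auto
  have neD: "D \<noteq> {}" unfolding D_def proof -
    have "(1,0) \<in> {(j,k). j < K \<and> k < K \<and> j \<noteq> k}" using assms by auto
    then show "{(j,k). j < K \<and> k < K \<and> j \<noteq> k} \<noteq> {}" by blast
  qed
  have dpos: "delta > 0" unfolding delta_def using finD neD
    by (subst Min_gr_iff) (auto simp: D_def a_def intro: cos_ne_1)
  have dle: "delta \<le> 1 - cos (a j - a k)" if "j < K" "k < K" "j \<noteq> k" for j k
    unfolding delta_def using finD that by (intro Min_le) (auto simp: D_def)
  have "Ssum d K n W' H' tau \<le> real n * (real K * (real K * tau / delta))" if "tau > 0" for tau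
  proof -
    have "Ssum d K n W' H' tau \<le> real (card {..<n}) * (real K * (real K * tau / delta))"
      unfolding Ssum_def
    proof (intro sum_bounded_above)
      fix i assume i: "i \<in> {..<n}"
      show "(\<Sum>k<K. L_CE K (logits d W' (hcol n H' k i)) k tau) \<le> real K * (real K * tau / delta)"
        using sum_bounded_above[of "{..<K}" "\<lambda>k. L_CE K (logits d W' (hcol n H' k i)) k tau" "real K * tau / delta"]
      proof -
        have "L_CE K (logits d W' (hcol n H' k i)) k tau \<le> real K * tau / delta" if "k < K" for k
        proof -
          have "L_CE K (logits d W' (W' k)) k tau \<le> real K * tau / delta"
            proof (rule CE_upper)
            fix j assume "j < K" "j \<noteq> k"
            then show "logits d W' (W' k) j - logits d W' (W' k) k \<le> - delta"
              using dle[of j k] lg[of j k] lg[of k k] that by simp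
          qed (use that \<open>tau > 0\<close> dpos in auto)
          then show ?thesis using hc that i by simp
        qed
        then show ?thesis using sum_bounded_above[of "{..<K}" "\<lambda>k. L_CE K (logits d W' (hcol n H' k i)) k tau" "real K * tau / delta"]
          by simp
      qed
    qed
    then show ?thesis by simp
  qed
  then show ?thesis using W'OB H'OB dpos by blast
qed


lemma construct1:
  assumes "2 \<le> K" "0 < n" "0 < tau"
  shows "Ssum 1 K n (\<lambda>c r. if c < K \<and> r = 0 then 1 else 0) (\<lambda>c r. if c < n * K \<and> r = 0 then 1 else 0) tau
     = real n * (real K * ln (real K))"
proof -
  have kn: "k * n + i < n * K" if "k < K" "i < n" for k i
  proof -
    have "k * n + i < (k+1) * n" using that by simp
    also have "\<dots> \<le> K * n" using that by (intro mult_right_mono) auto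
    finally show ?thesis by (simp add: mult.commute)
  qed
  have "L_CE K (logits 1 (\<lambda>c r. if c < K \<and> r = 0 then 1 else 0) (hcol n (\<lambda>c r. if c < n * K \<and> r = 0 then 1 else 0) k i)) k tau = ln (real K)"
    if "k < K" "i < n" for k i
    using that kn[OF that] assms by (simp add: CE_eq logits_def hcol_def)
  then show ?thesis unfolding Ssum_def by simp
qed

lemma OB1: "W \<in> OB 1 K \<Longrightarrow> c < K \<Longrightarrow> W c 0 = 1 \<or> W c 0 = -1"
  unfolding OB_def by (auto simp: power2_eq_1_iff)

theorem mainTheorem11:
  fixes d K n :: nat
  assumes "0 < d" and "0 < n" and "2 \<le> K"
  shows "\<exists>tau0>0. \<forall>tau. 0 < tau \<and> tau < tau0 \<longrightarrow>
           argmin_L0 d K n tau \<subseteq> WH_minus d K n"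
proof (cases "d = 1")
  case True
  define tau0 where "tau0 = 1 / (real n * (real K * ln (real K)) + 1)"
  have lnK: "ln (real K) \<ge> 0" using assms by simp
  have A: "0 \<le> real n * (real K * ln (real K))" using lnK by simp
  have t0: "tau0 > 0" unfolding tau0_def using A by simp
  have "argmin_L0 d K n tau \<subseteq> WH_minus d K n" if tau: "0 < tau" "tau < tau0" for tau
  proof
    fix p assume p: "p \<in> argmin_L0 d K n tau"
    obtain W H where pWH: "p = (W, H)" by (cases p)
    have WOB: "W \<in> OB d K" and HOB: "H \<in> OB d (n*K)" using p pWH by (auto simp: argmin_L0_def)
    show "p \<in> WH_minus d K n"
    proof (rule ccontr)
      assume "p \<notin> WH_minus d K n"
      then obtain i k k' where ikk: "i < n" "k < K" "k' < K" "k' \<noteq> k"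
        and m: "(\<Sum>r<d. (W k' r - W k r) * hcol n H k i r) > 0"
        using WOB HOB pWH by (auto simp: WH_minus_def not_le)
      have kn: "k * n + i < n * K"
      proof -
        have "k * n + i < (k+1) * n" using ikk by simp
        also have "\<dots> \<le> K * n" using ikk by (intro mult_right_mono) auto
        finally show ?thesis by (simp add: mult.commute)
      qed
      have m2: "(\<Sum>r<d. (W k' r - W k r) * hcol n H k i r) = 2"
        using m OB1[of W K k'] OB1[of W K k] OB1[of H "n*K" "k*n+i"] WOB HOB ikk kn True
        by (auto simp: hcol_def)
      define W' where "W' = (\<lambda>c r. if c < K \<and> r = (0::nat) then (1::real) else 0)"
      define H' where "H' = (\<lambda>c r. if c < n * K \<and> r = (0::nat) then (1::real) else 0)"
      have W'OB: "W' \<in> OB d K" using True by (auto simp: OB_def W'_def)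
      have H'OB: "H' \<in> OB d (n*K)" using True by (auto simp: OB_def H'_def)
      have "ln (1 + exp (2 / tau)) \<le> Ssum d K n W' H' tau"
        using key[OF p[unfolded pWH] W'OB H'OB assms(3) tau(1) assms(2) ikk] m2 by simp
      also have "\<dots> = real n * (real K * ln (real K))"
        unfolding W'_def H'_def True by (rule construct1) (use assms tau in auto)
      finally have c1: "ln (1 + exp (2 / tau)) \<le> real n * (real K * ln (real K))" .
      have "2 / tau = ln (exp (2 / tau))" by simp
      also have "\<dots> \<le> ln (1 + exp (2 / tau))" by (intro ln_mono) auto
      finally have c2: "2 / tau \<le> real n * (real K * ln (real K))" using c1 by linarith
      have "1 / tau0 < 1 / tau" using tau t0 by (intro divide_strict_left_mono) auto
      then have "real n * (real K * ln (real K)) + 1 < 1 / tau" unfolding tau0_def by simp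
      moreover have "1 / tau \<le> 2 / tau" using tau by (simp add: divide_right_mono)
      ultimately show False using c2 by linarith
    qed
  qed
  then show ?thesis using t0 by blast
next
  case False
  then have d2: "2 \<le> d" using assms by simp
  obtain W' H' delta where W'OB: "W' \<in> OB d K" and H'OB: "H' \<in> OB d (n*K)" and dpos: "delta > 0"
    and bnd: "\<And>tau. tau > 0 \<Longrightarrow> Ssum d K n W' H' tau \<le> real n * (real K * (real K * tau / delta))"
    using construct2[OF d2 assms(3) assms(2)] by blast
  define c where "c = real n * (real K * real K) / delta"
  have cpos: "c > 0" unfolding c_def using assms dpos by simp
  define tau0 where "tau0 = ln 2 / c"
  have t0: "tau0 > 0" unfolding tau0_def using cpos by simp
  have "argmin_L0 d K n tau \<subseteq> WH_minus d K n" if tau: "0 < tau" "tau < tau0" for tau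
  proof
    fix p assume p: "p \<in> argmin_L0 d K n tau"
    obtain W H where pWH: "p = (W, H)" by (cases p)
    have WOB: "W \<in> OB d K" and HOB: "H \<in> OB d (n*K)" using p pWH by (auto simp: argmin_L0_def)
    show "p \<in> WH_minus d K n"
    proof (rule ccontr)
      assume "p \<notin> WH_minus d K n"
      then obtain i k k' where ikk: "i < n" "k < K" "k' < K" "k' \<noteq> k"
        and m: "(\<Sum>r<d. (W k' r - W k r) * hcol n H k i r) > 0"
        using WOB HOB pWH by (auto simp: WH_minus_def not_le)
      define mm where "mm = (\<Sum>r<d. (W k' r - W k r) * hcol n H k i r)"
      have "ln (1 + exp (mm / tau)) \<le> Ssum d K n W' H' tau"
        unfolding mm_def by (rule key[OF p[unfolded pWH] W'OB H'OB assms(3) tau(1) assms(2) ikk])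
      also have "\<dots> \<le> c * tau" using bnd[OF tau(1)] unfolding c_def by (simp add: field_simps)
      also have "\<dots> < c * tau0" using cpos tau by simp
      also have "\<dots> = ln 2" unfolding tau0_def using cpos by simp
      finally have c1: "ln (1 + exp (mm / tau)) < ln 2" .
      have "exp (mm / tau) > 1" using m tau unfolding mm_def by simp
      then have "ln 2 < ln (1 + exp (mm / tau))" by (subst ln_less_cancel_iff) (auto intro: add_pos_pos)
      then show False using c1 by simp
    qed
  qed
  then show ?thesis using t0 by blast
qed

end
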